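(* Let $n\ge1$ and consider the matrix algebra $M_n(\mathbb{R})$, with an element $s$ identified with the vector in $\mathbb{R}^{n^2}$ obtained by stacking its columns, and let $\mathcal{T}$ be the $n^2\times n^2$ matrix representing the transpose map $s\mapsto s^T$ in these coordinates. Then $\mathfrak{u}_{M_n(\mathbb{R})}$ is one-dimensional, $\mathcal{T}$ is the unique normalized uncurling metric of $M_n(\mathbb{R})$, and the associated special unital norm is $(\det s)^{1/n}$, i.e. the usual norm $(\det s)^n$ (the determinant of the left regular representation of $s$) raised to the power $1/n^2$.
   Context: For an algebra with underlying vector space $\mathbb{R}^N$ (standard basis, elements $s$ as column vectors, $\mathbf{d}s$ the column of coordinate differentials, "$\cdot$" the Euclidean dot product, $\|\mathbf{1}\|^2=\mathbf{1}\cdot\mathbf{1}$; for $M_n(\mathbb{R})$, $\|\mathbf{1}\|^2=n$): an uncurling metric is a real symmetric $N\times N$ matrix $L$ with $d\big((s^{-1})^TL\,\mathbf{d}s\big)=0$ on an open ball centered at $\mathbf{1}$ consisting only of units; the anti-rotor $\mathfrak{u}$ is the vector space of uncurling metrics. A normalized uncurling metric is an uncurling metric $L$ with $s^TLs^{-1}=\|\mathbf{1}\|^2$ near $\mathbf{1}$. The unital norm associated with $L$ is $\ell(s)=\exp\!\big(\frac{1}{\|\mathbf{1}\|^2}\int_{\mathbf{1}}^s[Lt^{-1}]\cdot\mathbf{d}t\big)$ near $\mathbf{1}$; a special unital norm is one associated with a normalized uncurling metric. *)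

theory Defs
  imports "HOL-Analysis.Analysis"
begin

text \<open>The matrix algebra M_n(R) is real^'n^'n (entry s $ i $ j = row i, column j).
  Its underlying coordinate space R^(n^2) is real^('n \<times> 'n), the coordinate of index
  (i,j) being the entry s $ i $ j.\<close>

definition mvec :: "real^'n::finite^'n \<Rightarrow> real^('n \<times> 'n)" where
  "mvec s = (\<chi> p. s $ fst p $ snd p)"

definition munvec :: "real^('n::finite \<times> 'n) \<Rightarrow> real^'n^'n" where
  "munvec x = (\<chi> i j. x $ (i, j))"

definition mone :: "real^('n::finite \<times> 'n)" where
  "mone = mvec (mat 1 :: real^'n^'n)"

definition one_normsq :: "'n::finite itself \<Rightarrow> real" where
  "one_normsq _ = (mone :: real^('n \<times> 'n)) \<bullet> mone"

definition minv :: "real^('n::finite \<times> 'n) \<Rightarrow> real^('n \<times> 'n)" where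
  "minv x = mvec (matrix_inv (munvec x))"

definition transpose_matrix :: "real^('n::finite \<times> 'n)^('n \<times> 'n)" where
  "transpose_matrix = (\<chi> p q. if q = prod.swap p then 1 else 0)"

definition left_reg :: "real^'n::finite^'n \<Rightarrow> real^('n \<times> 'n)^('n \<times> 'n)" where
  "left_reg s = (\<chi> p q. if snd q = snd p then s $ fst p $ fst q else 0)"

text \<open>The 1-form with coefficient vector field F is closed on S:
  d(sum_i F_i dx_i) = 0, i.e. the partial derivatives satisfy d_j F_i = d_i F_j.\<close>
definition closed_form_on :: "(real^'m::finite \<Rightarrow> real^'m) \<Rightarrow> (real^'m) set \<Rightarrow> bool" where
  "closed_form_on F S \<longleftrightarrow>
     (\<forall>x\<in>S. \<exists>D. (F has_derivative D) (at x) \<and>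
        (\<forall>i j. D (axis j 1) $ i = D (axis i 1) $ j))"

text \<open>Uncurling metric: symmetric L such that d((s^{-1})^T L ds) = 0 on an open ball
  centered at 1 consisting only of units.\<close>
definition uncurling_metric :: "real^('n::finite \<times> 'n)^('n \<times> 'n) \<Rightarrow> bool" where
  "uncurling_metric L \<longleftrightarrow> transpose L = L \<and>
     (\<exists>r>0. (\<forall>x\<in>ball (mone :: real^('n \<times> 'n)) r. invertible (munvec x)) \<and>
            closed_form_on (\<lambda>x. L *v minv x) (ball mone r))"

definition anti_rotor :: "'n::finite itself \<Rightarrow> (real^('n \<times> 'n)^('n \<times> 'n)) set" where
  "anti_rotor _ = {L. uncurling_metric L}"

definition normalized_uncurling_metric :: "real^('n::finite \<times> 'n)^('n \<times> 'n) \<Rightarrow> bool" where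
  "normalized_uncurling_metric L \<longleftrightarrow> uncurling_metric L \<and>
     (\<exists>r>0. \<forall>x\<in>ball mone r. x \<bullet> (L *v minv x) = one_normsq TYPE('n))"

text \<open>Unital norm: exp((1/||1||^2) * int_1^s [L t^{-1}] . dt), the line integral taken
  along the straight segment from 1 to s (path-independent near 1 since the form is closed).\<close>
definition unital_norm :: "real^('n::finite \<times> 'n)^('n \<times> 'n) \<Rightarrow> real^('n \<times> 'n) \<Rightarrow> real" where
  "unital_norm L s = exp ((1 / one_normsq TYPE('n)) *
      integral {0..1} (\<lambda>t. (L *v minv (mone + t *\<^sub>R (s - mone))) \<bullet> (s - mone)))"

end

theory Submission
  imports Defs "HOL-Analysis.Analysis"
begin




lemma matrix_inv_props:
  fixes A :: "real^'n::finite^'n"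
  assumes "invertible A"
  shows "A ** matrix_inv A = mat 1" "matrix_inv A ** A = mat 1"
  using someI_ex[OF assms[unfolded invertible_def]] unfolding matrix_inv_def by auto

lemma matrix_inv_unique:
  fixes A B :: "real^'n::finite^'n"
  assumes "A ** B = mat 1"
  shows "matrix_inv A = B"
proof -
  have inv: "invertible A" using assms invertible_right_inverse by blast
  have "matrix_inv A = matrix_inv A ** (A ** B)" by (simp add: assms)
  also have "\<dots> = B" by (simp add: matrix_mul_assoc matrix_inv_props[OF inv])
  finally show ?thesis .
qed

lemma matrix_add_rdistrib': "((B + C) ** A) = (B ** A) + (C ** A)"
  by (vector matrix_matrix_mult_def sum.distrib[symmetric] field_simps)

lemma matrix_sub_ldistrib: "(A::real^'n::finite^'n) ** (B - C) = A ** B - A ** C"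
  by (vector matrix_matrix_mult_def sum_subtractf[symmetric] field_simps)

lemma matrix_sub_rdistrib: "((B::real^'n::finite^'n) - C) ** A = B ** A - C ** A"
  by (vector matrix_matrix_mult_def sum_subtractf[symmetric] field_simps)

lemma matrix_neg_r[simp]: "(A::real^'n::finite^'n) ** (- B) = - (A ** B)"
  by (vector matrix_matrix_mult_def sum_negf[symmetric])

lemma matrix_neg_l[simp]: "(- (A::real^'n::finite^'n)) ** B = - (A ** B)"
  by (vector matrix_matrix_mult_def sum_negf[symmetric])

lemma bilinear_mmult: "bilinear (\<lambda>(A::real^'n::finite^'n) (B::real^'n^'n). A ** B)"
  unfolding bilinear_def
  by (auto intro!: linearI simp: matrix_add_ldistrib matrix_add_rdistrib' scalar_matrix_assoc matrix_scalar_ac)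

lemma bb_mmult: "bounded_bilinear (\<lambda>(A::real^'n::finite^'n) (B::real^'n^'n). A ** B)"
  using bilinear_mmult bilinear_conv_bounded_bilinear by blast

lemma det_leibniz: "det (A::real^'n::finite^'n) = (\<Sum>p\<in>{p. p permutes (UNIV::'n set)}. of_int (sign p) * (\<Prod>i\<in>UNIV. A $ i $ p i))"
  by (simp add: det_def)

lemma continuous_det: "continuous_on UNIV (det :: real^'n::finite^'n \<Rightarrow> real)"
  unfolding det_leibniz by (intro continuous_intros)

lemma tendsto_det[tendsto_intros]:
  fixes f :: "'a \<Rightarrow> real^'n::finite^'n"
  assumes "(f \<longlongrightarrow> A) F" shows "((\<lambda>x. det (f x)) \<longlongrightarrow> det A) F"
  using continuous_det assms
  by (metis UNIV_I continuous_on_def isCont_tendsto_compose open_UNIV continuous_on_eq_continuous_at)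

lemma mat_vec_axis: "((M::real^'n::finite^'m) *v axis j 1) $ k = M $ k $ j"
  by (simp add: matrix_vector_mult_def axis_def if_distrib if_distribR cong: if_cong)

definition cram :: "real^'n::finite^'n \<Rightarrow> real^'n^'n" where
  "cram Y = (\<chi> k j. det (\<chi> i l. if l = k then axis j 1 $ i else Y$i$l) / det Y)"

lemma matrix_inv_cram:
  fixes Y :: "real^'n::finite^'n"
  assumes "det Y \<noteq> 0" shows "matrix_inv Y = cram Y"
proof -
  have inv: "invertible Y" using assms invertible_det_nz by blast
  show ?thesis
  unfolding vec_eq_iff
  proof (intro allI)
    fix k j
    have "Y *v (matrix_inv Y *v axis j (1::real)) = axis j 1"
      by (simp add: matrix_vector_mul_assoc matrix_inv_props[OF inv])
    then have "matrix_inv Y *v axis j (1::real) = (\<chi> k. det(\<chi> i l. if l=k then axis j 1 $ i else Y$i$l) / det Y)"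
      using cramer[OF assms] by blast
    then have "(matrix_inv Y *v axis j (1::real)) $ k = det(\<chi> i l. if l=k then axis j 1 $ i else Y$i$l) / det Y"
      by simp
    then show "matrix_inv Y $ k $ j = cram Y $ k $ j"
      by (simp add: mat_vec_axis cram_def)
  qed
qed

lemma tendsto_cram:
  fixes X :: "real^'n::finite^'n"
  assumes "det X \<noteq> 0" and "(f \<longlongrightarrow> X) F"
  shows "((\<lambda>x. cram (f x)) \<longlongrightarrow> cram X) F"
  unfolding cram_def
  apply (intro tendsto_intros assms)
  subgoal for k j i l by (cases "l = k") (auto intro!: tendsto_intros assms)
  done

lemma isCont_matrix_inv:
  fixes X :: "real^'n::finite^'n"
  assumes "det X \<noteq> 0" shows "isCont matrix_inv X"
proof -
  have ev: "\<forall>\<^sub>F Y in at X. det Y \<noteq> 0"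
    by (rule tendsto_imp_eventually_ne[OF tendsto_det[OF tendsto_ident_at] assms])
  have "(cram \<longlongrightarrow> cram X) (at X)"
    by (rule tendsto_cram[OF assms tendsto_ident_at])
  then have "(matrix_inv \<longlongrightarrow> matrix_inv X) (at X)"
    unfolding matrix_inv_cram[OF assms]
    by (rule Lim_transform_eventually) (use ev in \<open>rule eventually_mono, simp add: matrix_inv_cram\<close>)
  then show ?thesis unfolding isCont_def .
qed

lemma has_derivative_matrix_inv:
  fixes X :: "real^'n::finite^'n"
  assumes "invertible X"
  shows "(matrix_inv has_derivative (\<lambda>H. - (matrix_inv X ** H ** matrix_inv X))) (at X)"
proof -
  let ?S = "matrix_inv X"
  have dX: "det X \<noteq> 0" using assms invertible_det_nz by blast
  interpret bb: bounded_bilinear "(\<lambda>(A::real^'n^'n) (B::real^'n^'n). A ** B)" by (rule bb_mmult)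
  obtain K where K: "\<And>(a::real^'n^'n) (b::real^'n^'n). norm (a ** b) \<le> norm a * norm b * K" and Kp: "K > 0"
    using bb.pos_bounded by force
  have bl: "bounded_linear (\<lambda>H. - (?S ** H ** ?S))"
    by (intro bounded_linear_minus bounded_linear_compose[OF bb.bounded_linear_left] bb.bounded_linear_right)
  have ev: "\<forall>\<^sub>F h in at 0. det (X + h) \<noteq> 0"
    by (rule tendsto_imp_eventually_ne[OF tendsto_det] ) (use dX in \<open>auto intro!: tendsto_eq_intros\<close>)
  have cont: "((\<lambda>h. matrix_inv (X + h)) \<longlongrightarrow> ?S) (at 0)"
    using isCont_matrix_inv[OF dX] 
    by (metis (no_types) LIM_offset_zero add.commute isCont_def)
  have lim: "((\<lambda>h. K * K * norm ?S * norm (?S - matrix_inv (X + h))) \<longlongrightarrow> 0) (at 0)"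
  proof -
    have "((\<lambda>h. ?S - matrix_inv (X + h)) \<longlongrightarrow> ?S - ?S) (at 0)"
      by (intro tendsto_intros cont)
    then have "((\<lambda>h. norm (?S - matrix_inv (X + h))) \<longlongrightarrow> 0) (at 0)"
      using tendsto_norm_zero by fastforce
    then show ?thesis using tendsto_mult_right_zero by blast
  qed
  have "((\<lambda>h. norm (matrix_inv (X + h) - ?S - - (?S ** h ** ?S)) / norm h) \<longlongrightarrow> 0) (at 0)"
  proof (rule Lim_null_comparison[OF _ lim])
    show "\<forall>\<^sub>F h in at 0. norm (norm (matrix_inv (X + h) - ?S - - (?S ** h ** ?S)) / norm h)
          \<le> K * K * norm ?S * norm (?S - matrix_inv (X + h))"
      using ev
    proof (rule eventually_mono)
      fix h :: "real^'n^'n"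
      assume dh: "det (X + h) \<noteq> 0"
      let ?T = "matrix_inv (X + h)"
      have ih: "invertible (X + h)" using dh invertible_det_nz by blast
      have eq: "?T - ?S - - (?S ** h ** ?S) = (?S - ?T) ** (h ** ?S)"
      proof -
        have a1: "?T ** X ** ?S = ?T"
          by (simp add: matrix_mul_assoc[symmetric] matrix_inv_props[OF assms])
        have a2: "?T ** (X + h) ** ?S = ?S"
          by (simp add: matrix_inv_props[OF ih])
        have "?T ** (X - (X + h)) ** ?S = ?T ** X ** ?S - ?T ** (X + h) ** ?S"
          by (simp only: matrix_sub_ldistrib matrix_sub_rdistrib)
        then have "?T - ?S = ?T ** (X - (X + h)) ** ?S" using a1 a2 by simp
        then show ?thesis
          by (simp add: matrix_sub_ldistrib matrix_sub_rdistrib matrix_mul_assoc)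
      qed
      have "norm ((?S - ?T) ** (h ** ?S)) \<le> norm (?S - ?T) * norm (h ** ?S) * K" by (rule K)
      also have "\<dots> \<le> norm (?S - ?T) * (norm h * norm ?S * K) * K"
        by (intro mult_right_mono mult_left_mono K) (use Kp in auto)
      finally have "norm ((?S - ?T) ** (h ** ?S)) \<le> K * K * norm ?S * norm (?S - ?T) * norm h"
        by (simp add: algebra_simps)
      then show "norm (norm (?T - ?S - - (?S ** h ** ?S)) / norm h) \<le> K * K * norm ?S * norm (?S - ?T)"
        unfolding eq
        by (cases "h = 0") (auto simp: divide_le_eq mult_ac)
    qed
  qed
  then show ?thesis unfolding has_derivative_at using bl by simp
qed


lemma det_replace_row:
  fixes M B :: "real^'m::finite^'m"
  shows "det (\<chi> j. if j = i then B $ i else M $ j)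
       = (\<Sum>p\<in>{p. p permutes (UNIV::'m set)}. of_int (sign p) * (B $ i $ p i * (\<Prod>j\<in>UNIV - {i}. M $ j $ p j)))"
  unfolding det_leibniz
proof (rule sum.cong[OF refl])
  fix p :: "'m \<Rightarrow> 'm"
  have "(\<Prod>j\<in>UNIV. (\<chi> j. if j = i then B $ i else M $ j) $ j $ p j)
        = (\<Prod>j\<in>insert i (UNIV - {i}). (\<chi> j. if j = i then B $ i else M $ j) $ j $ p j)"
    by (simp add: insert_absorb)
  also have "\<dots> = B $ i $ p i * (\<Prod>j\<in>UNIV - {i}. M $ j $ p j)"
    by (subst prod.insert) (auto intro!: prod.cong)
  finally show "of_int (sign p) * (\<Prod>j\<in>UNIV. (\<chi> j. if j = i then B $ i else M $ j) $ j $ p j)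
     = of_int (sign p) * (B $ i $ p i * (\<Prod>j\<in>UNIV - {i}. M $ j $ p j))" by simp
qed

lemma det_replace_row_inv:
  fixes M B :: "real^'m::finite^'m"
  assumes "invertible M"
  shows "det (\<chi> j. if j = i then B $ i else M $ j) = (\<Sum>j\<in>UNIV. B $ i $ j * matrix_inv M $ j $ i) * det M"
proof -
  define c where "c = (\<chi> k. \<Sum>j\<in>UNIV. B $ i $ j * matrix_inv M $ j $ k)"
  have "(\<Sum>k\<in>UNIV. c $ k *s row k M) = B $ i"
  proof -
    have "(\<Sum>k\<in>UNIV. c $ k *s row k M) = (\<chi> l. \<Sum>k\<in>UNIV. c $ k * M $ k $ l)"
      by (simp add: vec_eq_iff sum_component row_def)
    also have "\<dots> = (\<chi> l. \<Sum>j\<in>UNIV. B $ i $ j * (matrix_inv M ** M) $ j $ l)"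
    proof -
      have "(\<Sum>k\<in>UNIV. c $ k * M $ k $ l) = (\<Sum>j\<in>UNIV. B $ i $ j * (matrix_inv M ** M) $ j $ l)" for l
        unfolding c_def matrix_matrix_mult_def
        by (simp only: vec_lambda_beta sum_distrib_left sum_distrib_right mult.assoc) (rule sum.swap)
      then show ?thesis by simp
    qed
    also have "\<dots> = B $ i"
      by (simp add: matrix_inv_props[OF assms] mat_def vec_eq_iff if_distrib if_distribR cong: if_cong)
    finally show ?thesis .
  qed
  moreover have "(\<chi> j. if j = i then B $ i else M $ j) = (\<chi> j. if j = i then (\<Sum>k\<in>UNIV. c $ k *s row k M) else row j M)"
    proof -
      have rowM: "row k M = M $ k" for k by (simp add: row_def vec_eq_iff)
      show ?thesis using calculation unfolding rowM by (intro arg_cong[where f=vec_lambda] ext) simp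
    qed
  ultimately have "det (\<chi> j. if j = i then B $ i else M $ j) = c $ i * det M"
    using cramer_lemma_transpose[of i c M] by simp
  then show ?thesis by (simp add: c_def)
qed


lemma jacobi:
  fixes A B :: "real^'m::finite^'m"
  assumes inv: "invertible (A + t *\<^sub>R B)"
  shows "((\<lambda>u. det (A + u *\<^sub>R B)) has_real_derivative det (A + t *\<^sub>R B) * trace (matrix_inv (A + t *\<^sub>R B) ** B)) (at t)"
proof -
  let ?M = "A + t *\<^sub>R B"
  let ?P = "{p. p permutes (UNIV::'m set)}"
  have d0: "((\<lambda>u. (\<Prod>i\<in>UNIV. (A + u *\<^sub>R B) $ i $ p i)) has_real_derivative
        (\<Sum>i\<in>UNIV. B $ i $ p i * (\<Prod>j\<in>UNIV - {i}. ?M $ j $ p j))) (at t)" for p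
  proof -
    have "((\<lambda>u. (A + u *\<^sub>R B) $ i $ p i) has_real_derivative B $ i $ p i) (at t)" for i
      by (auto intro!: derivative_eq_intros)
    from has_field_derivative_prod[of UNIV, OF this] show ?thesis by simp
  qed
  have d: "((\<lambda>u. \<Sum>p\<in>?P. of_int (sign p) * (\<Prod>i\<in>UNIV. (A + u *\<^sub>R B) $ i $ p i))
     has_real_derivative (\<Sum>p\<in>?P. of_int (sign p) *
        (\<Sum>i\<in>UNIV. B $ i $ p i * (\<Prod>j\<in>UNIV - {i}. ?M $ j $ p j)))) (at t)"
    by (intro DERIV_sum DERIV_cmult d0)
  have "(\<Sum>p\<in>?P. of_int (sign p) *
        (\<Sum>i\<in>UNIV. B $ i $ p i * (\<Prod>j\<in>UNIV - {i}. ?M $ j $ p j)))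
      = (\<Sum>i\<in>UNIV. \<Sum>p\<in>?P. of_int (sign p) * (B $ i $ p i * (\<Prod>j\<in>UNIV - {i}. ?M $ j $ p j)))"
    by (simp only: sum_distrib_left) (rule sum.swap)
  also have "\<dots> = (\<Sum>i\<in>UNIV. det (\<chi> j. if j = i then B $ i else ?M $ j))"
    by (simp only: det_replace_row)
  also have "\<dots> = (\<Sum>i\<in>UNIV. (\<Sum>j\<in>UNIV. B $ i $ j * matrix_inv ?M $ j $ i)) * det ?M"
    by (simp only: det_replace_row_inv[OF inv] sum_distrib_right)
  also have "(\<Sum>i\<in>UNIV. (\<Sum>j\<in>UNIV. B $ i $ j * matrix_inv ?M $ j $ i)) = trace (B ** matrix_inv ?M)"
    by (simp add: trace_def matrix_matrix_mult_def)
  also have "\<dots> = trace (matrix_inv ?M ** B)" by (rule trace_mul_sym)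
  finally show ?thesis using d unfolding det_leibniz[symmetric] by (simp add: mult.commute)
qed





lemma munvec_mvec[simp]: "munvec (mvec Y) = Y"
  by (simp add: munvec_def mvec_def vec_eq_iff)

lemma mvec_munvec[simp]: "mvec (munvec x) = x"
  by (simp add: munvec_def mvec_def vec_eq_iff)

lemma mvec_nth[simp]: "mvec Y $ p = Y $ fst p $ snd p"
  by (simp add: mvec_def)

lemma munvec_nth[simp]: "munvec x $ i $ j = x $ (i, j)"
  by (simp add: munvec_def)

lemma linear_mvec: "linear (mvec :: real^'n::finite^'n \<Rightarrow> _)"
  by (intro linearI) (simp_all add: vec_eq_iff)

lemma linear_munvec: "linear (munvec :: real^('n::finite\<times>'n) \<Rightarrow> _)"
  by (intro linearI) (simp_all add: vec_eq_iff)

lemma bl_mvec: "bounded_linear (mvec :: real^'n::finite^'n \<Rightarrow> _)"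
  using linear_mvec linear_conv_bounded_linear by blast

lemma bl_munvec: "bounded_linear (munvec :: real^('n::finite\<times>'n) \<Rightarrow> _)"
  using linear_munvec linear_conv_bounded_linear by blast

lemma munvec_add: "munvec (x + y) = munvec x + munvec y"
  by (simp add: vec_eq_iff)
lemma munvec_diff: "munvec (x - y) = munvec x - munvec y"
  by (simp add: vec_eq_iff)
lemma munvec_scaleR: "munvec (c *\<^sub>R x) = c *\<^sub>R munvec x"
  by (simp add: vec_eq_iff)
lemma mvec_add: "mvec (x + y) = mvec x + mvec y"
  by (simp add: vec_eq_iff)
lemma mvec_scaleR: "mvec (c *\<^sub>R x) = c *\<^sub>R mvec x"
  by (simp add: vec_eq_iff)
lemma mvec_minus: "mvec (- x) = - mvec x"
  by (simp add: vec_eq_iff)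

lemma munvec_mone[simp]: "munvec (mone :: real^('n::finite\<times>'n)) = mat 1"
  by (simp add: mone_def)

lemma minv_alt: "minv x = mvec (matrix_inv (munvec x))"
  by (simp add: minv_def)

lemma has_derivative_minv:
  fixes x :: "real^('n::finite\<times>'n)"
  assumes "invertible (munvec x)"
  shows "(minv has_derivative (\<lambda>h. - mvec (matrix_inv (munvec x) ** munvec h ** matrix_inv (munvec x)))) (at x)"
proof -
  have "((\<lambda>x. mvec (matrix_inv (munvec x))) has_derivative
      (\<lambda>h. mvec (- (matrix_inv (munvec x) ** munvec h ** matrix_inv (munvec x))))) (at x)"
    by (rule has_derivative_compose[OF has_derivative_compose[OF bounded_linear_imp_has_derivative[OF bl_munvec]
          has_derivative_matrix_inv[OF assms]] bounded_linear_imp_has_derivative[OF bl_mvec], simplified o_def])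
  then show ?thesis unfolding minv_def[abs_def] mvec_minus .
qed

lemma has_derivative_F:
  fixes x :: "real^('n::finite\<times>'n)" and L :: "real^('n\<times>'n)^('n\<times>'n)"
  assumes "invertible (munvec x)"
  shows "((\<lambda>x. L *v minv x) has_derivative (\<lambda>h. L *v (- mvec (matrix_inv (munvec x) ** munvec h ** matrix_inv (munvec x))))) (at x)"
  by (rule has_derivative_compose[OF has_derivative_minv[OF assms] bounded_linear_imp_has_derivative[OF matrix_vector_mul_bounded_linear], simplified o_def])

lemma sum_pairs: "(\<Sum>p\<in>UNIV. f p) = (\<Sum>a\<in>UNIV. \<Sum>b\<in>UNIV. f (a, b))"
  by (simp add: sum.cartesian_product UNIV_Times_UNIV[symmetric] del: UNIV_Times_UNIV)

lemma T_mult: "(transpose_matrix *v v) $ p = v $ prod.swap p"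
  by (simp add: matrix_vector_mult_def transpose_matrix_def if_distrib if_distribR cong: if_cong)

lemma munvec_axis: "munvec (axis q (1::real)) $ i $ j = (if (i, j) = q then 1 else 0)"
  by (simp add: axis_def)

lemma elem_left: "(munvec (axis q 1) ** (M::real^'n::finite^'n)) $ i $ j = (if i = fst q then M $ snd q $ j else 0)"
proof -
  obtain a b where q: "q = (a, b)" by (cases q)
  have "(\<Sum>k\<in>UNIV. (if (i, k) = (a, b) then 1 else 0) * M $ k $ j) = (\<Sum>k\<in>UNIV. if k = b then (if i = a then M $ b $ j else 0) else 0)"
    by (rule sum.cong) auto
  then show ?thesis by (simp add: matrix_matrix_mult_def axis_def q)
qed

lemma elem_right: "((M::real^'n::finite^'n) ** munvec (axis q 1)) $ i $ j = (if j = snd q then M $ i $ fst q else 0)"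
proof -
  obtain a b where q: "q = (a, b)" by (cases q)
  have "(\<Sum>k\<in>UNIV. M $ i $ k * (if (k, j) = (a, b) then 1 else 0)) = (\<Sum>k\<in>UNIV. if k = a then (if j = b then M $ i $ a else 0) else 0)"
    by (rule sum.cong) auto
  then show ?thesis by (simp add: matrix_matrix_mult_def axis_def q)
qed

lemma elem_sandwich: "((S::real^'n::finite^'n) ** munvec (axis q 1) ** S) $ a $ b = S $ a $ fst q * S $ snd q $ b"
proof -
  have "(\<Sum>k\<in>UNIV. (S ** munvec (axis q 1)) $ a $ k * S $ k $ b) = (\<Sum>k\<in>UNIV. if k = snd q then S $ a $ fst q * S $ snd q $ b else 0)"
    by (rule sum.cong) (auto simp: elem_right)
  then show ?thesis by (simp add: matrix_matrix_mult_def)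
qed

lemma elem_mult: "munvec (axis (a,b) 1) ** munvec (axis (c,d) 1) = (if b = c then munvec (axis (a,d) (1::real)) else (0::real^'n::finite^'n))"
  by (simp add: vec_eq_iff elem_left) (auto simp: axis_def)

lemma Lv_elem: "(L *v mvec (munvec (axis q 1))) $ p = L $ p $ q"
  by (simp add: mat_vec_axis)




lemma inner_real_vec: "(x::real^'m::finite) \<bullet> y = (\<Sum>p\<in>UNIV. x $ p * y $ p)"
  by (simp add: inner_vec_def)

lemma trace_form: "(transpose_matrix *v mvec S) \<bullet> v = trace ((S::real^'n::finite^'n) ** munvec v)"
proof -
  have "(transpose_matrix *v mvec S) \<bullet> v = (\<Sum>a\<in>UNIV. \<Sum>b\<in>UNIV. S $ b $ a * v $ (a, b))"
    unfolding inner_real_vec by (subst sum_pairs) (simp add: T_mult)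
  also have "\<dots> = (\<Sum>b\<in>UNIV. \<Sum>a\<in>UNIV. S $ b $ a * v $ (a, b))" by (rule sum.swap)
  also have "\<dots> = trace (S ** munvec v)" by (simp add: trace_def matrix_matrix_mult_def)
  finally show ?thesis .
qed

lemma one_normsq_eq: "one_normsq TYPE('n::finite) = real CARD('n)"
proof -
  have "one_normsq TYPE('n) = (\<Sum>a\<in>(UNIV::'n set). \<Sum>b\<in>(UNIV::'n set). (mat 1 :: real^'n^'n) $ a $ b * (mat 1 :: real^'n^'n) $ a $ b)"
    unfolding one_normsq_def inner_real_vec by (subst sum_pairs) (simp add: mone_def)
  also have "\<dots> = (\<Sum>a\<in>(UNIV::'n set). 1)"
    by (simp add: mat_def if_distrib if_distribR cong: if_cong)
  finally show ?thesis by simp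
qed

lemma normalization_T:
  fixes x :: "real^('n::finite\<times>'n)"
  assumes "invertible (munvec x)"
  shows "x \<bullet> (transpose_matrix *v minv x) = real CARD('n)"
proof -
  have "x \<bullet> (transpose_matrix *v minv x) = trace (matrix_inv (munvec x) ** munvec x)"
    using trace_form[of "matrix_inv (munvec x)" x] by (simp add: inner_commute minv_def)
  also have "\<dots> = real CARD('n)" by (simp add: matrix_inv_props[OF assms] trace_I)
  finally show ?thesis .
qed

lemma swap_eq_iff: "(q = prod.swap p) \<longleftrightarrow> (p = prod.swap q)"
  by (cases p; cases q) auto

lemma transpose_T: "transpose (c *\<^sub>R transpose_matrix) = c *\<^sub>R transpose_matrix"
  by (simp add: transpose_def transpose_matrix_def vec_eq_iff)

lemma D_T_entry: "((c *\<^sub>R transpose_matrix) *v (- mvec ((S::real^'n::finite^'n) ** munvec (axis j 1) ** S))) $ i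
   = - c * (S $ snd i $ fst j * S $ snd j $ fst i)"
proof -
  have "((c *\<^sub>R transpose_matrix) *v (- mvec (S ** munvec (axis j 1) ** S))) $ i
      = c * ((transpose_matrix *v (- mvec (S ** munvec (axis j 1) ** S))) $ i)"
    by (simp only: scaleR_matrix_vector_assoc[symmetric] vector_scaleR_component real_scaleR_def)
  also have "\<dots> = c * (- (S ** munvec (axis j 1) ** S) $ snd i $ fst i)"
    by (simp only: T_mult vector_uminus_component mvec_nth fst_swap snd_swap)
  also have "\<dots> = - c * (S $ snd i $ fst j * S $ snd j $ fst i)"
    by (simp only: elem_sandwich)
  finally show ?thesis .
qed

lemma closed_cT:
  assumes "\<forall>x\<in>S. invertible (munvec x)"
  shows "closed_form_on (\<lambda>x. (c *\<^sub>R transpose_matrix) *v minv x) S"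
  unfolding closed_form_on_def
proof
  fix x assume "x \<in> S"
  then have ix: "invertible (munvec x)" using assms by blast
  let ?S = "matrix_inv (munvec x)"
  let ?D = "\<lambda>h. (c *\<^sub>R transpose_matrix) *v (- mvec (?S ** munvec h ** ?S))"
  have "\<forall>i j. ?D (axis j 1) $ i = ?D (axis i 1) $ j"
    by (simp add: D_T_entry mult_ac)
  then show "\<exists>D. ((\<lambda>x. (c *\<^sub>R transpose_matrix) *v minv x) has_derivative D) (at x) \<and>
          (\<forall>i j. D (axis j 1) $ i = D (axis i 1) $ j)"
    using has_derivative_F[OF ix] by blast
qed

lemma cont_det_munvec: "continuous_on UNIV (\<lambda>x::real^('n::finite\<times>'n). det (munvec x))"
  by (rule continuous_on_compose2[OF continuous_det linear_continuous_on[OF bl_munvec]]) auto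

lemma det_pos_ball: "\<exists>r>0. \<forall>x\<in>ball (mone::real^('n::finite\<times>'n)) r. det (munvec x) > 0"
proof -
  have o: "open {x::real^('n\<times>'n). 0 < det (munvec x)}"
    by (rule open_Collect_less[OF continuous_on_const cont_det_munvec])
  have "mone \<in> {x::real^('n\<times>'n). 0 < det (munvec x)}" by simp
  then obtain r where r: "r > 0" "ball mone r \<subseteq> {x::real^('n\<times>'n). 0 < det (munvec x)}"
    using o open_contains_ball by blast
  show ?thesis
  proof (intro exI[of _ r] conjI ballI)
    show "r > 0" by (rule r(1))
    fix x assume "x \<in> ball (mone::real^('n\<times>'n)) r"
    then show "det (munvec x) > 0" using r(2) by auto
  qed
qed




lemma uncurling_cT: "uncurling_metric (c *\<^sub>R (transpose_matrix :: real^('n::finite\<times>'n)^('n\<times>'n)))"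
proof -
  obtain r where r: "r > 0" "\<forall>x\<in>ball (mone::real^('n\<times>'n)) r. det (munvec x) > 0"
    using det_pos_ball by blast
  then have inv: "\<forall>x\<in>ball (mone::real^('n\<times>'n)) r. invertible (munvec x)"
    using invertible_det_nz by force
  show ?thesis unfolding uncurling_metric_def
    apply (rule conjI[OF transpose_T])
    apply (rule exI[of _ r])
    by (intro conjI; (rule r(1) | rule inv | rule closed_cT[OF inv]))
qed




lemma comb:
  fixes L :: "real^('n::finite\<times>'n)^('n\<times>'n)"
  assumes H: "\<And>i j a b c d. (if c = j then L$(a,b)$(i,d) else 0) + (if d = i then L$(a,b)$(c,j) else 0)
       = (if a = j then L$(c,d)$(i,b) else 0) + (if b = i then L$(c,d)$(a,j) else 0)"
  shows "\<exists>c. L = c *\<^sub>R transpose_matrix"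
proof -
  define m where "m x y = (\<Sum>c\<in>UNIV. L$(c,c)$(x,y))" for x y
  have F1: "2 * L$(a,b)$(i,j) = (if j = a then m i b else 0) + (if b = i then m a j else 0)" for a b i j
  proof -
    have "(\<Sum>c\<in>UNIV. (if c = j then L$(a,b)$(i,c) else 0) + (if c = i then L$(a,b)$(c,j) else 0))
        = (\<Sum>c\<in>UNIV. (if a = j then L$(c,c)$(i,b) else 0) + (if b = i then L$(c,c)$(a,j) else 0))"
      by (rule sum.cong[OF refl]) (rule H)
    then show ?thesis
      by (cases "a = j"; cases "b = i") (simp_all add: sum.distrib m_def)
  qed
  have F2: "m x y = 0" if "x \<noteq> y" for x y
  proof -
    have "L$(x,y)$(x,x) + L$(x,y)$(x,x) = L$(x,x)$(x,y)" using H[of x x x x x y] that by simp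
    moreover have "2 * L$(x,y)$(x,x) = m x y" using F1[of x y x x] that by simp
    moreover have "2 * L$(x,x)$(x,y) = m x y" using F1[of x x x y] that by simp
    ultimately show ?thesis by simp
  qed
  have F3: "m y y = m x x" if "x \<noteq> y" for x y
  proof -
    have "L$(y,x)$(x,y) = L$(x,x)$(x,x) + L$(x,x)$(y,y)" using H[of x y y x x x] that by simp
    moreover have "2 * L$(y,x)$(x,y) = m x x + m y y" using F1[of y x x y] that by simp
    moreover have "2 * L$(x,x)$(x,x) = m x x + m x x" using F1[of x x x x] by simp
    moreover have "2 * L$(x,x)$(y,y) = 0" using F1[of x x y y] that by simp
    ultimately show ?thesis by simp
  qed
  define z0 where "z0 = (undefined :: 'n)"
  have D: "m x x = m z0 z0" for x using F3[of z0 x] by (cases "x = z0") auto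
  show ?thesis
  proof (intro exI[of _ "m z0 z0"])
    show "L = m z0 z0 *\<^sub>R transpose_matrix"
      unfolding vec_eq_iff
    proof (intro allI)
      fix p q :: "'n \<times> 'n"
      obtain a b where p: "p = (a, b)" by (cases p)
      obtain g d where q: "q = (g, d)" by (cases q)
      have "2 * L$(a,b)$(g,d) = (if d = a then m g b else 0) + (if b = g then m a d else 0)" by (rule F1)
      then show "L $ p $ q = (m z0 z0 *\<^sub>R transpose_matrix) $ p $ q"
        using F2[of g b] F2[of a d] D[of a] D[of b]
        by (cases "d = a"; cases "b = g") (auto simp: p q transpose_matrix_def)
    qed
  qed
qed

lemma quad_coeff:
  fixes a b c a' b' c' :: real
  assumes "\<delta> > 0" and H: "\<And>t. \<bar>t\<bar> < \<delta> \<Longrightarrow> a + t * b + t\<^sup>2 * c = a' + t * b' + t\<^sup>2 * c'"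
  shows "b = b'"
proof -
  have 0: "a = a'" using H[of 0] assms(1) by simp
  let ?t = "\<delta> / 2"
  have t: "\<bar>?t\<bar> < \<delta>" "\<bar>-?t\<bar> < \<delta>" using assms(1) by auto
  have "a + ?t * b + ?t\<^sup>2 * c = a' + ?t * b' + ?t\<^sup>2 * c'" by (rule H[OF t(1)])
  moreover have "a + (-?t) * b + (-?t)\<^sup>2 * c = a' + (-?t) * b' + (-?t)\<^sup>2 * c'" by (rule H[OF t(2)])
  ultimately have "?t * b = ?t * b'" using 0 by (simp only: mult_minus_left power2_minus)
  then show ?thesis using assms(1) by simp
qed




lemma mv_neg: "(L::real^'m::finite^'k::finite) *v (- v) = - (L *v v)"
  by (simp add: vec_eq_iff matrix_vector_mult_def sum_negf[symmetric])

lemma sym_cond: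
  fixes L :: "real^('n::finite\<times>'n)^('n\<times>'n)"
  assumes "uncurling_metric L"
  obtains r where "r > 0" "\<forall>x\<in>ball (mone::real^('n\<times>'n)) r. invertible (munvec x)"
   "\<And>x p q. x \<in> ball mone r \<Longrightarrow>
      (L *v mvec (matrix_inv (munvec x) ** munvec (axis q 1) ** matrix_inv (munvec x))) $ p
    = (L *v mvec (matrix_inv (munvec x) ** munvec (axis p 1) ** matrix_inv (munvec x))) $ q"
proof -
  obtain r where r: "r > 0" "\<forall>x\<in>ball (mone::real^('n\<times>'n)) r. invertible (munvec x)"
    "closed_form_on (\<lambda>x. L *v minv x) (ball mone r)"
    using assms unfolding uncurling_metric_def by blast
  have "(L *v mvec (matrix_inv (munvec x) ** munvec (axis q 1) ** matrix_inv (munvec x))) $ p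
    = (L *v mvec (matrix_inv (munvec x) ** munvec (axis p 1) ** matrix_inv (munvec x))) $ q"
    if x: "x \<in> ball mone r" for x p q
  proof -
    from r(3) x obtain D where D: "((\<lambda>x. L *v minv x) has_derivative D) (at x)"
      "\<forall>i j. D (axis j 1) $ i = D (axis i 1) $ j"
      unfolding closed_form_on_def by blast
    have Deq: "D = (\<lambda>h. L *v (- mvec (matrix_inv (munvec x) ** munvec h ** matrix_inv (munvec x))))"
      using has_derivative_unique[OF D(1) has_derivative_F] r(2) x by blast
    have eq: "D (axis q 1) $ p = D (axis p 1) $ q" using D(2) by blast
    show ?thesis using eq unfolding Deq by (simp add: mv_neg mvec_minus)
  qed
  with r(1,2) that show ?thesis by blast
qed

lemma family:
  fixes A :: "real^'n::finite^'n"
  assumes "r > 0"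
  shows "\<exists>\<delta>>0. \<forall>t. \<bar>t\<bar> < \<delta> \<longrightarrow> mvec (matrix_inv (mat 1 + t *\<^sub>R A)) \<in> ball mone r \<and> invertible (mat 1 + t *\<^sub>R A)"
proof -
  have c1: "((\<lambda>t. mat 1 + t *\<^sub>R A) \<longlongrightarrow> mat 1) (nhds (0::real))"
  proof -
    have "((\<lambda>t. mat 1 + t *\<^sub>R A) \<longlongrightarrow> mat 1 + 0 *\<^sub>R A) (nhds (0::real))"
      by (intro tendsto_intros filterlim_ident)
    then show ?thesis by simp
  qed
  have e1: "\<forall>\<^sub>F t in nhds (0::real). det (mat 1 + t *\<^sub>R A) \<noteq> 0"
    by (rule tendsto_imp_eventually_ne[OF tendsto_det[OF c1]]) simp
  have ci: "isCont matrix_inv (mat 1 :: real^'n^'n)" by (rule isCont_matrix_inv) simp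
  have "((\<lambda>t. matrix_inv (mat 1 + t *\<^sub>R A)) \<longlongrightarrow> matrix_inv (mat 1)) (nhds (0::real))"
    by (rule isCont_tendsto_compose[OF ci c1])
  then have "((\<lambda>t. mvec (matrix_inv (mat 1 + t *\<^sub>R A))) \<longlongrightarrow> mvec (matrix_inv (mat 1 :: real^'n^'n))) (nhds (0::real))"
    by (rule bounded_linear.tendsto[OF bl_mvec])
  moreover have "matrix_inv (mat 1 :: real^'n^'n) = mat 1" by (rule matrix_inv_unique) simp
  ultimately have "((\<lambda>t. mvec (matrix_inv (mat 1 + t *\<^sub>R A))) \<longlongrightarrow> mone) (nhds (0::real))"
    by (simp add: mone_def)
  then have e2: "\<forall>\<^sub>F t in nhds (0::real). mvec (matrix_inv (mat 1 + t *\<^sub>R A)) \<in> ball mone r"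
    using assms by (intro topological_tendstoD) auto
  have "\<forall>\<^sub>F t in nhds (0::real). mvec (matrix_inv (mat 1 + t *\<^sub>R A)) \<in> ball mone r \<and> invertible (mat 1 + t *\<^sub>R A)"
    using eventually_conj[OF e2 e1] by (rule eventually_mono) (simp add: invertible_det_nz)
  then show ?thesis unfolding eventually_nhds_metric by (simp add: dist_real_def)
qed

lemma expand:
  fixes A :: "real^'n::finite^'n" and L :: "real^('n\<times>'n)^('n\<times>'n)"
  shows "(L *v mvec ((mat 1 + t *\<^sub>R A) ** munvec (axis q 1) ** (mat 1 + t *\<^sub>R A))) $ p
    = L$p$q + t * (\<Sum>r\<in>UNIV. L$p$r * (A$(fst r)$(fst q) * (if snd q = snd r then 1 else 0) + (if fst r = fst q then 1 else 0) * A$(snd q)$(snd r)))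
      + t\<^sup>2 * (\<Sum>r\<in>UNIV. L$p$r * (A$(fst r)$(fst q) * A$(snd q)$(snd r)))"
proof -
  have e: "(mat 1 + t *\<^sub>R A) $ x $ y = (if x = y then 1 else 0) + t * A $ x $ y" for x y
    by (simp add: mat_def)
  have "(L *v mvec ((mat 1 + t *\<^sub>R A) ** munvec (axis q 1) ** (mat 1 + t *\<^sub>R A))) $ p
     = (\<Sum>r\<in>UNIV. L$p$r * (((if fst r = fst q then 1 else 0) + t * A$(fst r)$(fst q)) * ((if snd q = snd r then 1 else 0) + t * A$(snd q)$(snd r))))"
    by (simp add: matrix_vector_mult_def elem_sandwich mat_def)
  also have "\<dots> = (\<Sum>r\<in>UNIV. L$p$r * ((if fst r = fst q then 1 else 0) * (if snd q = snd r then 1 else 0)))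
     + t * (\<Sum>r\<in>UNIV. L$p$r * (A$(fst r)$(fst q) * (if snd q = snd r then 1 else 0) + (if fst r = fst q then 1 else 0) * A$(snd q)$(snd r)))
      + t\<^sup>2 * (\<Sum>r\<in>UNIV. L$p$r * (A$(fst r)$(fst q) * A$(snd q)$(snd r)))"
    by (simp add: sum_distrib_left sum.distrib[symmetric] algebra_simps power2_eq_square)
  also have "(\<Sum>r\<in>UNIV. L$p$r * ((if fst r = fst q then 1 else 0) * (if snd q = snd r then 1 else 0))) = L$p$q"
  proof -
    have "(\<Sum>r\<in>UNIV. L$p$r * ((if fst r = fst q then 1 else 0) * (if snd q = snd r then 1 else 0)))
       = (\<Sum>r\<in>UNIV. if r = q then L$p$r else 0)"
      by (rule sum.cong[OF refl]) (auto simp: prod_eq_iff)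
    then show ?thesis by simp
  qed
  finally show ?thesis .
qed

lemma beta_elem:
  fixes L :: "real^('n::finite\<times>'n)^('n\<times>'n)"
  shows "(\<Sum>r\<in>UNIV. L$p$r * (munvec (axis (i,j) 1)$(fst r)$(fst q) * (if snd q = snd r then 1 else 0)
           + (if fst r = fst q then 1 else 0) * munvec (axis (i,j) (1::real))$(snd q)$(snd r)))
     = (if fst q = j then L$p$(i, snd q) else 0) + (if snd q = i then L$p$(fst q, j) else 0)"
proof -
  have "(\<Sum>r\<in>UNIV. L$p$r * (munvec (axis (i,j) 1)$(fst r)$(fst q) * (if snd q = snd r then 1 else 0)
           + (if fst r = fst q then 1 else 0) * munvec (axis (i,j) (1::real))$(snd q)$(snd r)))
     = (\<Sum>r\<in>UNIV. (if r = (i, snd q) then (if fst q = j then L$p$r else 0) else 0)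
          + (if r = (fst q, j) then (if snd q = i then L$p$r else 0) else 0))"
    by (rule sum.cong[OF refl]) (auto simp: axis_def prod_eq_iff)
  then show ?thesis by (simp add: sum.distrib)
qed




lemma uncurling_imp_cT:
  fixes L :: "real^('n::finite\<times>'n)^('n\<times>'n)"
  assumes "uncurling_metric L"
  shows "\<exists>c. L = c *\<^sub>R transpose_matrix"
proof -
  obtain r where r: "r > 0" "\<forall>x\<in>ball (mone::real^('n\<times>'n)) r. invertible (munvec x)"
   "\<And>x p q. x \<in> ball mone r \<Longrightarrow>
      (L *v mvec (matrix_inv (munvec x) ** munvec (axis q 1) ** matrix_inv (munvec x))) $ p
    = (L *v mvec (matrix_inv (munvec x) ** munvec (axis p 1) ** matrix_inv (munvec x))) $ q"
    using sym_cond[OF assms] by blast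
  show ?thesis
  proof (rule comb)
    fix i j a b c d :: 'n
    define A :: "real^'n^'n" where "A = munvec (axis (i,j) 1)"
    obtain \<delta> where \<delta>: "\<delta> > 0" "\<And>t. \<bar>t\<bar> < \<delta> \<Longrightarrow> mvec (matrix_inv (mat 1 + t *\<^sub>R A)) \<in> ball mone r \<and> invertible (mat 1 + t *\<^sub>R A)"
      using family[OF r(1), of A] by blast
    let ?p = "(a, b)" and ?q = "(c, d)"
    let ?\<beta> = "\<lambda>p q. (\<Sum>r\<in>UNIV. L$p$r * (A$(fst r)$(fst q) * (if snd q = snd r then 1 else 0) + (if fst r = fst q then 1 else 0) * A$(snd q)$(snd r)))"
    let ?\<gamma> = "\<lambda>p q. (\<Sum>r\<in>UNIV. L$p$r * (A$(fst r)$(fst q) * A$(snd q)$(snd r)))"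
    have "?\<beta> ?p ?q = ?\<beta> ?q ?p"
    proof (rule quad_coeff[OF \<delta>(1)])
      fix t :: real assume t: "\<bar>t\<bar> < \<delta>"
      let ?M = "mat 1 + t *\<^sub>R A"
      have inM: "invertible ?M" and xin: "mvec (matrix_inv ?M) \<in> ball mone r" using \<delta>(2)[OF t] by auto
      have ii: "matrix_inv (munvec (mvec (matrix_inv ?M))) = ?M"
        by (simp add: matrix_inv_unique matrix_inv_props[OF inM])
      have "(L *v mvec (?M ** munvec (axis ?q 1) ** ?M)) $ ?p = (L *v mvec (?M ** munvec (axis ?p 1) ** ?M)) $ ?q"
        using r(3)[OF xin, of ?q ?p] unfolding ii .
      then show "L$?p$?q + t * ?\<beta> ?p ?q + t\<^sup>2 * ?\<gamma> ?p ?q = L$?q$?p + t * ?\<beta> ?q ?p + t\<^sup>2 * ?\<gamma> ?q ?p"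
        unfolding expand .
    qed
    moreover have "?\<beta> ?p ?q = (if c = j then L$(a,b)$(i,d) else 0) + (if d = i then L$(a,b)$(c,j) else 0)"
      using beta_elem[where L=L and p="?p" and q="?q" and i=i and j=j] unfolding A_def by simp
    moreover have "?\<beta> ?q ?p = (if a = j then L$(c,d)$(i,b) else 0) + (if b = i then L$(c,d)$(a,j) else 0)"
      using beta_elem[where L=L and p="?q" and q="?p" and i=i and j=j] unfolding A_def by simp
    ultimately show "(if c = j then L$(a,b)$(i,d) else 0) + (if d = i then L$(a,b)$(c,j) else 0)
       = (if a = j then L$(c,d)$(i,b) else 0) + (if b = i then L$(c,d)$(a,j) else 0)"
      by simp
  qed
qed




lemma left_reg_mat1: "left_reg (mat 1 :: real^'n::finite^'n) = mat 1"
  by (auto simp: vec_eq_iff left_reg_def mat_def prod_eq_iff)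

lemma left_reg_add: "left_reg (A + C) = left_reg A + left_reg (C::real^'n::finite^'n)"
  by (auto simp: vec_eq_iff left_reg_def)

lemma left_reg_scaleR: "left_reg (c *\<^sub>R A) = c *\<^sub>R left_reg (A::real^'n::finite^'n)"
  by (auto simp: vec_eq_iff left_reg_def)

lemma left_reg_mult: "left_reg (A ** C) = left_reg A ** left_reg (C::real^'n::finite^'n)"
proof -
  have "(left_reg A ** left_reg C) $ p $ q = left_reg (A ** C) $ p $ q" for p q
  proof -
    have "(left_reg A ** left_reg C) $ p $ q = (\<Sum>a\<in>UNIV. \<Sum>b\<in>UNIV. left_reg A $ p $ (a,b) * left_reg C $ (a,b) $ q)"
      unfolding matrix_matrix_mult_def by (simp add: sum_pairs[where f="\<lambda>r. left_reg A $ p $ r * left_reg C $ r $ q"])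
    also have "\<dots> = (\<Sum>a\<in>UNIV. \<Sum>b\<in>UNIV. if b = snd p then (if snd q = snd p then A $ fst p $ a * C $ a $ fst q else 0) else 0)"
      by (intro sum.cong refl) (auto simp: left_reg_def)
    also have "\<dots> = left_reg (A ** C) $ p $ q"
      by (simp add: left_reg_def matrix_matrix_mult_def)
    finally show ?thesis .
  qed
  then show ?thesis by (simp add: vec_eq_iff)
qed

lemma left_reg_inv:
  fixes M :: "real^'n::finite^'n"
  assumes "invertible M"
  shows "matrix_inv (left_reg M) = left_reg (matrix_inv M)" "invertible (left_reg M)"
proof -
  have "left_reg M ** left_reg (matrix_inv M) = mat 1"
    by (simp add: left_reg_mult[symmetric] matrix_inv_props[OF assms] left_reg_mat1)
  then show "matrix_inv (left_reg M) = left_reg (matrix_inv M)" "invertible (left_reg M)"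
    using matrix_inv_unique invertible_right_inverse by blast+
qed

lemma trace_left_reg: "trace (left_reg (M::real^'n::finite^'n)) = real CARD('n) * trace M"
proof -
  have "trace (left_reg M) = (\<Sum>a\<in>UNIV. \<Sum>b\<in>(UNIV::'n set). M $ a $ a)"
    unfolding trace_def by (subst sum_pairs) (simp add: left_reg_def)
  also have "\<dots> = real CARD('n) * trace M"
    by (simp add: trace_def sum_distrib_left mult.commute)
  finally show ?thesis .
qed

lemma unital_T:
  fixes x :: "real^('n::finite\<times>'n)"
  assumes pos: "\<forall>y\<in>ball (mone::real^('n\<times>'n)) r. det (munvec y) > 0" and x: "x \<in> ball mone r"
  shows "unital_norm transpose_matrix x = det (munvec x) powr (1 / real CARD('n)) \<and>
         unital_norm transpose_matrix x = det (left_reg (munvec x)) powr (1 / real (CARD('n))^2)"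
proof -
  define B where "B = munvec x - mat 1"
  define g where "g u = det (mat 1 + u *\<^sub>R B)" for u
  define \<tau> where "\<tau> u = trace (matrix_inv (mat 1 + u *\<^sub>R B) ** B)" for u
  have seg: "munvec (mone + t *\<^sub>R (x - mone)) = mat 1 + t *\<^sub>R B" for t
    by (simp add: munvec_add munvec_scaleR munvec_diff B_def)
  have inball: "mone + t *\<^sub>R (x - mone) \<in> ball mone r" if "t \<in> {0..1}" for t
  proof -
    have "dist mone (mone + t *\<^sub>R (x - mone)) = t * dist mone x"
      using that by (simp add: dist_norm norm_minus_commute)
    also have "\<dots> \<le> dist mone x" using that by (auto intro: mult_left_le_one_le)
    finally show ?thesis using x by simp
  qed
  have gpos: "g t > 0" if "t \<in> {0..1}" for t
    using pos inball[OF that] seg g_def by metis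
  have ginv: "invertible (mat 1 + t *\<^sub>R B)" if "t \<in> {0..1}" for t
    using gpos[OF that] invertible_det_nz g_def by force
  have dg: "(g has_real_derivative g t * \<tau> t) (at t)" if "t \<in> {0..1}" for t
    unfolding g_def \<tau>_def by (rule jacobi[OF ginv[OF that]])
  have integrand: "(transpose_matrix *v minv (mone + t *\<^sub>R (x - mone))) \<bullet> (x - mone) = \<tau> t" for t
    by (simp add: minv_def seg trace_form \<tau>_def munvec_diff B_def)
  have n0: "real CARD('n) > 0" by simp
  have g0: "g 0 = 1" by (simp add: g_def)
  have g1: "g 1 = det (munvec x)" by (simp add: g_def B_def)
  have dln: "((\<lambda>u. ln (g u)) has_real_derivative \<tau> t) (at t)" if "t \<in> {0..1}" for t
  proof -
    have "((\<lambda>u. ln (g u)) has_real_derivative inverse (g t) * (g t * \<tau> t)) (at t)"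
      by (rule DERIV_chain2[OF DERIV_ln[OF gpos[OF that]] dg[OF that]])
    moreover have eq: "inverse (g t) * (g t * \<tau> t) = \<tau> t" using gpos[OF that] by simp
    ultimately show ?thesis by (simp only: eq)
  qed
  have "(\<tau> has_integral (ln (g 1) - ln (g 0))) {0..1}"
    by (rule fundamental_theorem_of_calculus)
       (auto simp: has_real_derivative_iff_has_vector_derivative[symmetric] intro!: DERIV_subset[OF dln])
  then have int: "integral {0..1} \<tau> = ln (det (munvec x))" using g0 g1 by (simp add: integral_unique)
  have U: "unital_norm transpose_matrix x = det (munvec x) powr (1 / real CARD('n))"
  proof -
    have "unital_norm transpose_matrix x = exp ((1 / real CARD('n)) * ln (det (munvec x)))"
      unfolding unital_norm_def one_normsq_eq integrand int ..
    also have "\<dots> = det (munvec x) powr (1 / real CARD('n))"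
      using gpos[of 1] g1 by (simp add: powr_def)
    finally show ?thesis .
  qed
  define g2 where "g2 u = det (mat 1 + u *\<^sub>R left_reg B)" for u
  have lr: "left_reg (mat 1 + u *\<^sub>R B) = mat 1 + u *\<^sub>R left_reg B" for u
    by (simp add: left_reg_add left_reg_scaleR left_reg_mat1)
  have dg2: "(g2 has_real_derivative g2 t * (real CARD('n) * \<tau> t)) (at t)" if "t \<in> {0..1}" for t
  proof -
    have inv2: "invertible (mat 1 + t *\<^sub>R left_reg B)" using left_reg_inv(2)[OF ginv[OF that]] lr by simp
    have "trace (matrix_inv (mat 1 + t *\<^sub>R left_reg B) ** left_reg B) = real CARD('n) * \<tau> t"
      using left_reg_inv(1)[OF ginv[OF that]]
      by (simp add: lr \<tau>_def left_reg_mult[symmetric] trace_left_reg)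
    then show ?thesis using jacobi[OF inv2] unfolding g2_def by simp
  qed
  define h where "h u = g2 u / g u ^ CARD('n)" for u
  have dh: "(h has_real_derivative 0) (at t)" if "t \<in> {0..1}" for t
  proof -
    have gt: "g t \<noteq> 0" using gpos[OF that] by simp
    have "(h has_real_derivative (g2 t * (real CARD('n) * \<tau> t) * g t ^ CARD('n) -
             g2 t * (real CARD('n) * ((g t * \<tau> t) * g t ^ (CARD('n) - Suc 0)))) / (g t ^ CARD('n) * g t ^ CARD('n))) (at t)"
      unfolding h_def[abs_def]
      by (rule DERIV_divide[OF dg2[OF that] DERIV_power[OF dg[OF that]]]) (simp add: gt)
    moreover have pw: "g t * g t ^ (CARD('n) - Suc 0) = g t ^ CARD('n)"
      using power_Suc[of "g t" "CARD('n) - Suc 0"] by simp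
    then have pw2: "(g t * \<tau> t) * g t ^ (CARD('n) - Suc 0) = \<tau> t * g t ^ CARD('n)"
      by (metis mult.commute mult.left_commute)
    ultimately show ?thesis by (simp only: pw2) (simp add: algebra_simps)
  qed
  have "h 1 = h 0"
  proof (rule DERIV_isconst_end[of 0 1 h])
    show "continuous_on {0..1} h"
      by (rule continuous_at_imp_continuous_on) (use dh DERIV_isCont in blast)
    show "\<And>x. 0 < x \<Longrightarrow> x < 1 \<Longrightarrow> DERIV h x :> 0" using dh by auto
  qed simp
  moreover have "h 0 = 1" by (simp add: h_def g2_def g0)
  ultimately have "h 1 = 1" by simp
  then have "g2 1 / g 1 ^ CARD('n) = 1" by (simp only: h_def)
  then have "g2 1 = g 1 ^ CARD('n)" using gpos[of 1] by (simp add: field_simps)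
  then have dl: "det (left_reg (munvec x)) = det (munvec x) ^ CARD('n)"
    using lr[of 1] g1 by (simp add: g2_def B_def)
  have "det (left_reg (munvec x)) powr (1 / real (CARD('n))^2) = det (munvec x) powr (1 / real CARD('n))"
  proof -
    have dp: "det (munvec x) > 0" using gpos[of 1] g1 by simp
    have "det (left_reg (munvec x)) powr (1 / real (CARD('n))^2) = (det (munvec x) powr real CARD('n)) powr (1 / real (CARD('n))^2)"
      using dl dp by (simp add: powr_realpow)
    also have "\<dots> = det (munvec x) powr (real CARD('n) * (1 / real (CARD('n))^2))" by (simp add: powr_powr)
    also have "real CARD('n) * (1 / real (CARD('n))^2) = 1 / real CARD('n)" by (simp add: power2_eq_square)
    finally show ?thesis .
  qed
  with U show ?thesis by simp
qed




theorem theorem8p1: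
  shows "subspace (anti_rotor TYPE('n::finite)) \<and> dim (anti_rotor TYPE('n)) = 1 \<and>
    {L. normalized_uncurling_metric L} = {transpose_matrix :: real^('n \<times> 'n)^('n \<times> 'n)} \<and>
    (\<exists>r>0. \<forall>x\<in>ball (mone :: real^('n \<times> 'n)) r.
        unital_norm transpose_matrix x = det (munvec x) powr (1 / real CARD('n)) \<and>
        unital_norm transpose_matrix x = det (left_reg (munvec x)) powr (1 / real (CARD('n))^2))"
proof -
  let ?T = "transpose_matrix :: real^('n \<times> 'n)^('n \<times> 'n)"
  have AR: "anti_rotor TYPE('n) = span {?T}"
  proof -
    have "anti_rotor TYPE('n) = range (\<lambda>c. c *\<^sub>R ?T)"
      unfolding anti_rotor_def using uncurling_imp_cT uncurling_cT by blast
    then show ?thesis by (simp add: span_singleton)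
  qed
  have Tnz: "?T \<noteq> 0"
  proof
    assume "?T = 0"
    then have "?T $ (undefined, undefined) $ (undefined, undefined) = 0" by simp
    then show False by (simp add: transpose_matrix_def)
  qed
  have S1: "subspace (anti_rotor TYPE('n))" unfolding AR by simp
  have S2: "dim (anti_rotor TYPE('n)) = 1" unfolding AR using Tnz by simp
  have S3: "{L. normalized_uncurling_metric L} = {?T}"
  proof (intro set_eqI iffI)
    fix L :: "real^('n \<times> 'n)^('n \<times> 'n)" assume "L \<in> {L. normalized_uncurling_metric L}"
    then have un: "uncurling_metric L" and nr: "\<exists>r>0. \<forall>x\<in>ball mone r. x \<bullet> (L *v minv x) = one_normsq TYPE('n)"
      unfolding normalized_uncurling_metric_def by auto
    obtain c where c: "L = c *\<^sub>R ?T" using uncurling_imp_cT[OF un] by blast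
    from nr obtain r where "r > 0" "\<forall>x\<in>ball mone r. x \<bullet> (L *v minv x) = one_normsq TYPE('n)" by blast
    then have "mone \<bullet> (L *v minv mone) = one_normsq TYPE('n)" by simp
    moreover have "mone \<bullet> (L *v minv mone) = c * real CARD('n)"
    proof -
      have "mone \<bullet> (L *v minv mone) = c * (mone \<bullet> (?T *v minv (mone :: real^('n\<times>'n))))"
        by (simp add: c scaleR_matrix_vector_assoc[symmetric])
      also have "mone \<bullet> (?T *v minv (mone :: real^('n\<times>'n))) = real CARD('n)"
        by (rule normalization_T) (simp add: invertible_det_nz)
      finally show ?thesis .
    qed
    ultimately have "c = 1" by (simp add: one_normsq_eq)
    then show "L \<in> {?T}" using c by simp
  next
    fix L :: "real^('n \<times> 'n)^('n \<times> 'n)" assume "L \<in> {?T}"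
    then have L: "L = ?T" by simp
    obtain r where r: "r > 0" "\<forall>x\<in>ball (mone::real^('n\<times>'n)) r. det (munvec x) > 0"
      using det_pos_ball by blast
    have "\<forall>x\<in>ball mone r. x \<bullet> (?T *v minv x) = one_normsq TYPE('n)"
      using r(2) by (auto simp: one_normsq_eq intro!: normalization_T simp: invertible_det_nz)
    moreover have "uncurling_metric ?T" using uncurling_cT[of 1] by simp
    ultimately show "L \<in> {L. normalized_uncurling_metric L}"
      unfolding normalized_uncurling_metric_def L using r(1) by blast
  qed
  obtain r where r: "r > 0" "\<forall>x\<in>ball (mone::real^('n\<times>'n)) r. det (munvec x) > 0"
    using det_pos_ball by blast
  have S4: "\<exists>r>0. \<forall>x\<in>ball (mone :: real^('n \<times> 'n)) r.
        unital_norm transpose_matrix x = det (munvec x) powr (1 / real CARD('n)) \<and>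
        unital_norm transpose_matrix x = det (left_reg (munvec x)) powr (1 / real (CARD('n))^2)"
    using r unital_T by blast
  show ?thesis using S1 S2 S3 S4 by blast
qed


end
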